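(* Let $n\ge1$, identify $\mathbb{R}^{n+1}=\mathbb{R}^n\times\mathbb{R}$, let $f\colon\mathbb{R}^n\to(0,\infty)$ be continuous with epigraph $L=\{(x,y)\mid f(x)\le y\}$, and let $K\subset\mathbb{R}^{n+1}$ be a closed set with $K\cap L=\emptyset$. Suppose there exist no point $x_0\in\mathbb{R}^n$ and real numbers $0<y_1<y_2$ such that $(x_0,y_1)\notin K$ and $(x_0,y_2)\in K$. Then for every $x\in\mathbb{R}^n$ the vertical line $\{(x,y)\mid y\in\mathbb{R}\}$ contains at most one point $p$ with $d(p,K)=d(p,L)$.
   Context: $d(p,A)=\inf\{|p-q|\mid q\in A\}$ (Euclidean distance). *)

theory Defs
  imports "HOL-Analysis.Analysis"
begin

text \<open>Distance from a point to a set, d(p,A) = inf { |p - q| : q in A },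
  valued in the extended reals so that d(p, {}) = +infinity (the usual inf convention).\<close>
definition setdist_e :: "'a::metric_space \<Rightarrow> 'a set \<Rightarrow> ereal" where
  "setdist_e p A = (INF q\<in>A. ereal (dist p q))"

end

theory Submission
  imports Defs
begin

lemma setdist_min:
  fixes A :: "('a::heine_borel) set"
  assumes "closed A" "A \<noteq> {}"
  obtains a where "a \<in> A" "setdist_e p A = ereal (dist p a)" "\<And>b. b \<in> A \<Longrightarrow> dist p a \<le> dist p b"
proof -
  obtain a where a: "a \<in> A" "\<And>b. b \<in> A \<Longrightarrow> dist p a \<le> dist p b"
    using distance_attains_inf[OF assms] by metis
  have "setdist_e p A = ereal (dist p a)"
    unfolding setdist_e_def
  proof (rule antisym)
    show "(INF q\<in>A. ereal (dist p q)) \<le> ereal (dist p a)" using a(1) by (rule INF_lower)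
    show "ereal (dist p a) \<le> (INF q\<in>A. ereal (dist p q))"
      using a by (intro INF_greatest) auto
  qed
  with a that show ?thesis by blast
qed

lemma setdist_le: "q \<in> A \<Longrightarrow> setdist_e p A \<le> ereal (dist p q)"
  unfolding setdist_e_def by (rule INF_lower)

lemma dist_sq_le:
  fixes a c e :: "'a::metric_space" and b d g :: real
  shows "dist (a, b) (c, d) \<le> dist (a, b) (e, g) \<longleftrightarrow>
         (dist a c)\<^sup>2 + (b - d)\<^sup>2 \<le> (dist a e)\<^sup>2 + (b - g)\<^sup>2"
  by (simp add: dist_Pair_Pair dist_real_def)

lemma sq_less: "\<bar>a\<bar> < \<bar>b\<bar> \<Longrightarrow> a\<^sup>2 < (b::real)\<^sup>2"
  by (metis abs_le_square_iff not_le)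

lemma main:
  fixes f :: "real^'n \<Rightarrow> real" and K :: "((real^'n) \<times> real) set"
  assumes f_cont: "continuous_on UNIV f"
    and f_pos: "\<And>x. f x > 0"
    and K_closed: "closed K"
    and K_disj: "K \<inter> {(x, y). f x \<le> y} = {}"
    and no_gap: "\<not> (\<exists>x0 y1 y2. 0 < y1 \<and> y1 < y2 \<and> (x0, y1) \<notin> K \<and> (x0, y2) \<in> K)"
    and y12: "y1 < y2"
    and e1: "setdist_e (x, y1) K = setdist_e (x, y1) {(x, y). f x \<le> y}"
    and e2: "setdist_e (x, y2) K = setdist_e (x, y2) {(x, y). f x \<le> y}"
  shows False
proof -
  define L where "L = {(x, y). f x \<le> y}"
  have memL: "(z, w) \<in> L \<longleftrightarrow> f z \<le> w" for z w by (simp add: L_def)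
  have "L = {p. f (fst p) \<le> snd p}" by (auto simp: L_def)
  moreover have "closed {p. f (fst p) \<le> snd p}"
    by (intro closed_Collect_le continuous_on_compose2[OF f_cont] continuous_intros) auto
  ultimately have Lc: "closed L" by simp
  have Lne: "L \<noteq> {}" using memL[of x "f x"] by auto
  obtain l1 where l1: "l1 \<in> L" "setdist_e (x, y1) L = ereal (dist (x, y1) l1)"
    using setdist_min[OF Lc Lne] by metis
  have Kne: "K \<noteq> {}"
  proof
    assume "K = {}"
    then have "setdist_e (x, y2) K = (\<infinity>::ereal)" by (simp add: setdist_e_def top_ereal_def)
    moreover have "setdist_e (x, y2) L \<le> ereal (dist (x, y2) (x, f x))"
      by (rule setdist_le) (simp add: memL)
    ultimately show False using e2 unfolding L_def by simp
  qed
  obtain k2 where k2: "k2 \<in> K" "setdist_e (x, y2) K = ereal (dist (x, y2) k2)"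
      "\<And>b. b \<in> K \<Longrightarrow> dist (x, y2) k2 \<le> dist (x, y2) b"
    using setdist_min[OF K_closed Kne] by metis
  obtain lz lw where lzw: "l1 = (lz, lw)" by (cases l1)
  obtain kz kw where kzw: "k2 = (kz, kw)" by (cases k2)
  have A0: "dist (x, y1) l1 \<le> dist (x, y1) k" if "k \<in> K" for k
  proof -
    have "ereal (dist (x, y1) l1) = setdist_e (x, y1) K" using l1 e1 L_def by simp
    also have "\<dots> \<le> ereal (dist (x, y1) k)" using that by (rule setdist_le)
    finally show ?thesis by simp
  qed
  have D0: "dist (x, y2) k2 \<le> dist (x, y2) l" if "l \<in> L" for l
  proof -
    have "ereal (dist (x, y2) k2) = setdist_e (x, y2) L" using k2 e2 L_def by simp
    also have "\<dots> \<le> ereal (dist (x, y2) l)" using that by (rule setdist_le)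
    finally show ?thesis by simp
  qed
  define hk where "hk = dist x kz"
  define hl where "hl = dist x lz"
  have A: "hl\<^sup>2 + (y1 - lw)\<^sup>2 \<le> (dist x z)\<^sup>2 + (y1 - w)\<^sup>2" if "(z, w) \<in> K" for z w
    using A0[OF that] by (simp add: lzw hl_def dist_sq_le)
  have C: "hk\<^sup>2 + (y2 - kw)\<^sup>2 \<le> (dist x z)\<^sup>2 + (y2 - w)\<^sup>2" if "(z, w) \<in> K" for z w
    using k2(3)[OF that] by (simp add: kzw hk_def dist_sq_le)
  have D: "hk\<^sup>2 + (y2 - kw)\<^sup>2 \<le> (dist x z)\<^sup>2 + (y2 - w)\<^sup>2" if "f z \<le> w" for z w
    using D0[of "(z, w)"] that by (simp add: kzw hk_def dist_sq_le memL)
  have flz: "f lz \<le> lw" using l1(1) lzw memL by simp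
  have lwpos: "lw > 0" using flz f_pos[of lz] by linarith
  have kK: "(kz, kw) \<in> K" using k2 kzw by simp
  have "lw \<le> kw"
  proof -
    have 1: "hl\<^sup>2 + (y1 - lw)\<^sup>2 \<le> hk\<^sup>2 + (y1 - kw)\<^sup>2" using A[OF kK] hk_def by simp
    have 2: "hk\<^sup>2 + (y2 - kw)\<^sup>2 \<le> hl\<^sup>2 + (y2 - lw)\<^sup>2" using D[OF flz] hl_def by simp
    from 1 2 have "(y2 - y1) * (lw - kw) \<le> 0"
      by (simp add: power2_eq_square algebra_simps)
    with y12 show ?thesis by (simp add: mult_le_0_iff)
  qed
  have col: "(kz, v) \<in> K" if "0 < v" "v \<le> kw" for v
    using no_gap that kK by (cases "v = kw") (auto, metis order_le_neq_trans)
  have "hk\<^sup>2 \<le> hl\<^sup>2" using D[of lz kw] flz \<open>lw \<le> kw\<close> hl_def by simp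
  moreover have "hl\<^sup>2 \<le> hk\<^sup>2" using A[OF col[of lw]] lwpos \<open>lw \<le> kw\<close> hk_def by simp
  ultimately have H: "hk\<^sup>2 = hl\<^sup>2" by simp
  have "kw \<le> y2"
  proof (rule ccontr)
    assume "\<not> kw \<le> y2"
    define v where "v = (kw + max y2 0) / 2"
    have "0 < v" "v \<le> kw" using \<open>\<not> kw \<le> y2\<close> lwpos \<open>lw \<le> kw\<close> by (auto simp: v_def)
    from C[OF col[OF this]] have "(y2 - kw)\<^sup>2 \<le> (y2 - v)\<^sup>2" by (simp add: hk_def)
    moreover have "(y2 - v)\<^sup>2 < (y2 - kw)\<^sup>2"
      using \<open>\<not> kw \<le> y2\<close> lwpos \<open>lw \<le> kw\<close>
      by (intro sq_less) (auto simp: v_def)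
    ultimately show False by simp
  qed
  have "y2 \<le> kw"
  proof (rule ccontr)
    assume "\<not> y2 \<le> kw"
    then have "hk\<^sup>2 + (y2 - kw)\<^sup>2 \<le> hl\<^sup>2" using D[of lz y2] flz \<open>lw \<le> kw\<close> hl_def by simp
    moreover have "(y2 - kw)\<^sup>2 > 0" using \<open>\<not> y2 \<le> kw\<close> by simp
    ultimately show False using H by simp
  qed
  have "lw \<le> y1"
  proof (rule ccontr)
    assume "\<not> lw \<le> y1"
    define v where "v = (lw + max y1 0) / 2"
    have "0 < v" "v \<le> kw" using \<open>\<not> lw \<le> y1\<close> lwpos \<open>lw \<le> kw\<close> by (auto simp: v_def)
    from A[OF col[OF this]] H have "(y1 - lw)\<^sup>2 \<le> (y1 - v)\<^sup>2" by (simp add: hk_def)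
    moreover have "(y1 - v)\<^sup>2 < (y1 - lw)\<^sup>2"
      using \<open>\<not> lw \<le> y1\<close> lwpos
      by (intro sq_less) (auto simp: v_def)
    ultimately show False by simp
  qed
  have kwy: "kw = y2" using \<open>kw \<le> y2\<close> \<open>y2 \<le> kw\<close> by simp
  show False
  proof (cases "hl = 0")
    case True
    then have "lz = x" "kz = x" using H by (auto simp: hl_def hk_def)
    then have "(x, y2) \<in> K \<inter> {(x, y). f x \<le> y}"
      using kK kwy flz \<open>lw \<le> y1\<close> y12 by auto
    then show False using K_disj by blast
  next
    case False
    then have hlpos: "hl > 0" by (simp add: hl_def)
    define g where "g s = f (x + s *\<^sub>R (lz - x))" for s :: real
    have big: "g s > y2" if "0 \<le> s" "s < 1" for s
    proof (rule ccontr)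
      assume "\<not> g s > y2"
      then have "hk\<^sup>2 \<le> (dist x (x + s *\<^sub>R (lz - x)))\<^sup>2"
        using D[of "x + s *\<^sub>R (lz - x)" y2] kwy by (simp add: g_def)
      also have "dist x (x + s *\<^sub>R (lz - x)) = s * hl"
        using that by (simp add: dist_norm hl_def norm_minus_commute)
      finally have "hl\<^sup>2 \<le> (s * hl)\<^sup>2" using H by simp
      moreover have "(s * hl)\<^sup>2 < hl\<^sup>2"
        using that hlpos by (intro sq_less) (auto simp: mult_less_cancel_right1)
      ultimately show False by simp
    qed
    have cont: "isCont f lz" using f_cont by (simp add: continuous_on_eq_continuous_at)
    have "((\<lambda>n. x + (1 - inverse (real (Suc n))) *\<^sub>R (lz - x)) \<longlongrightarrow> x + (1 - 0) *\<^sub>R (lz - x)) sequentially"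
      by (intro tendsto_intros LIMSEQ_inverse_real_of_nat)
    then have "((\<lambda>n. x + (1 - inverse (real (Suc n))) *\<^sub>R (lz - x)) \<longlongrightarrow> lz) sequentially" by simp
    from isCont_tendsto_compose[OF cont this]
    have lim: "((\<lambda>n. g (1 - inverse (real (Suc n)))) \<longlongrightarrow> f lz) sequentially" by (simp add: g_def)
    have "y2 \<le> f lz"
    proof (rule LIMSEQ_le_const[OF lim], intro exI allI impI)
      fix n :: nat
      have "0 \<le> 1 - inverse (real (Suc n))" by (simp add: field_simps)
      moreover have "1 - inverse (real (Suc n)) < 1" by simp
      ultimately show "y2 \<le> g (1 - inverse (real (Suc n)))" using big by fastforce
    qed
    then show False using flz \<open>lw \<le> y1\<close> y12 by simp
  qed
qed

theorem theorem3:
  fixes f :: "real^'n \<Rightarrow> real" and K :: "((real^'n) \<times> real) set"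
  assumes f_cont: "continuous_on UNIV f"
    and f_pos: "\<And>x. f x > 0"
    and K_closed: "closed K"
    and K_disj: "K \<inter> {(x, y). f x \<le> y} = {}"
    and no_gap: "\<not> (\<exists>x0 y1 y2. 0 < y1 \<and> y1 < y2 \<and> (x0, y1) \<notin> K \<and> (x0, y2) \<in> K)"
  shows "\<forall>x y1 y2.
           setdist_e (x, y1) K = setdist_e (x, y1) {(x, y). f x \<le> y} \<and>
           setdist_e (x, y2) K = setdist_e (x, y2) {(x, y). f x \<le> y}
           \<longrightarrow> y1 = y2"
proof (intro allI impI)
  fix x y1 y2
  assume h: "setdist_e (x, y1) K = setdist_e (x, y1) {(x, y). f x \<le> y} \<and>
           setdist_e (x, y2) K = setdist_e (x, y2) {(x, y). f x \<le> y}"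
  show "y1 = y2"
  proof (rule linorder_cases[of y1 y2])
    assume "y1 < y2"
    then show ?thesis using main[OF assms, of y1 y2 x] h by blast
  next
    assume "y2 < y1"
    then show ?thesis using main[OF assms, of y2 y1 x] h by blast
  qed
qed

end
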